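(* Let $A\subset B(H)$ be an R$^*$-algebra with $\mathrm{id}_H\in A$, and let $p,q$ be projections in $A$. Then the projection onto $pH+qH$ belongs to $A$ and is the least upper bound $p\vee q$ of $p,q$ in the set $\mathcal{P}(A)$ of projections of $A$ (in particular $pH+qH$ is closed); the projection onto $pH\cap qH$ belongs to $A$ and is the greatest lower bound $p\wedge q$ in $\mathcal{P}(A)$; and $1-p$, the projection onto $(pH)^\perp$, belongs to $A$.
   Context: An R$^*$-algebra is a (not necessarily closed) $^*$-subalgebra $A$ of $B(H)$, $H$ a complex Hilbert space, such that for every $x\in A$ there exists $y\in A$ with $xyx=x$; equivalently, every self-adjoint operator in $A$ has finite spectrum. $\mathcal{P}(A)=\{p\in A: p=p^2=p^*\}$ is ordered by $p\le q$ iff $pq=p$ (i.e. $pH\subset qH$). *)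

theory Defs
  imports "HOL-Analysis.Analysis"
begin

class complex_vector = real_vector +
  fixes scaleC :: "complex \<Rightarrow> 'a \<Rightarrow> 'a" (infixr \<open>*\<^sub>C\<close> 75)
  assumes scaleC_add_right: "a *\<^sub>C (x + y) = a *\<^sub>C x + a *\<^sub>C y"
    and scaleC_add_left: "(a + b) *\<^sub>C x = a *\<^sub>C x + b *\<^sub>C x"
    and scaleC_scaleC: "a *\<^sub>C (b *\<^sub>C x) = (a * b) *\<^sub>C x"
    and scaleC_one: "1 *\<^sub>C x = x"
    and scaleC_of_real: "complex_of_real r *\<^sub>C x = r *\<^sub>R x"

class complex_inner = complex_vector + real_normed_vector +
  fixes cinner :: "'a \<Rightarrow> 'a \<Rightarrow> complex"
  assumes cinner_commute: "cinner x y = cnj (cinner y x)"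
    and cinner_add_left: "cinner (x + y) z = cinner x z + cinner y z"
    and cinner_scaleC_left: "cinner (a *\<^sub>C x) y = cnj a * cinner x y"
    and cinner_self_real: "Im (cinner x x) = 0"
    and cinner_self_nonneg: "0 \<le> Re (cinner x x)"
    and cinner_self_eq_zero: "cinner x x = 0 \<longleftrightarrow> x = 0"
    and norm_eq_sqrt_cinner: "norm x = sqrt (Re (cinner x x))"

class chilbert_space = complex_inner + complete_space

definition bounded_clinear :: "('a::complex_inner \<Rightarrow> 'a) \<Rightarrow> bool" where
  "bounded_clinear T \<longleftrightarrow>
     (\<forall>x y. T (x + y) = T x + T y) \<and> (\<forall>c x. T (c *\<^sub>C x) = c *\<^sub>C T x) \<and>
     (\<exists>K. \<forall>x. norm (T x) \<le> norm x * K)"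

definition adj :: "('a::complex_inner \<Rightarrow> 'a) \<Rightarrow> ('a \<Rightarrow> 'a)" where
  "adj T = (SOME S. \<forall>x y. cinner (T x) y = cinner x (S y))"

text \<open>A (not necessarily closed) *-subalgebra of B(H).\<close>
definition star_subalgebra :: "('a::chilbert_space \<Rightarrow> 'a) set \<Rightarrow> bool" where
  "star_subalgebra A \<longleftrightarrow>
     (\<forall>T\<in>A. bounded_clinear T) \<and> (\<lambda>x. 0) \<in> A \<and>
     (\<forall>S\<in>A. \<forall>T\<in>A. (\<lambda>x. S x + T x) \<in> A) \<and>
     (\<forall>c. \<forall>T\<in>A. (\<lambda>x. c *\<^sub>C T x) \<in> A) \<and>
     (\<forall>S\<in>A. \<forall>T\<in>A. S \<circ> T \<in> A) \<and>
     (\<forall>T\<in>A. adj T \<in> A)"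

definition R_star_algebra :: "('a::chilbert_space \<Rightarrow> 'a) set \<Rightarrow> bool" where
  "R_star_algebra A \<longleftrightarrow> star_subalgebra A \<and> (\<forall>x\<in>A. \<exists>y\<in>A. x \<circ> y \<circ> x = x)"

definition projections :: "('a::chilbert_space \<Rightarrow> 'a) set \<Rightarrow> ('a \<Rightarrow> 'a) set" where
  "projections A = {p \<in> A. p \<circ> p = p \<and> adj p = p}"

definition proj_le :: "('a \<Rightarrow> 'a) \<Rightarrow> ('a \<Rightarrow> 'a) \<Rightarrow> bool" where
  "proj_le p q \<longleftrightarrow> p \<circ> q = p"

definition orth_compl :: "'a::complex_inner set \<Rightarrow> 'a set" where
  "orth_compl M = {x. \<forall>y\<in>M. cinner y x = 0}"

end

theory Submission
  imports Defs
begin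


lemma scaleC_minus1: "(-1::complex) *\<^sub>C x = - (x::'a::complex_vector)"
  using scaleC_of_real[of "-1" x] by simp

lemma scaleC_zero_right: "a *\<^sub>C (0::'a::complex_vector) = 0"
  using scaleC_add_right[of a "0::'a" 0] by simp

lemma cinner_add_right: "cinner z (x + y) = cinner z x + cinner (z::'a::complex_inner) y"
  by (subst (1 2 3) cinner_commute) (simp add: cinner_add_left)

lemma cinner_scaleC_right: "cinner x (a *\<^sub>C y) = a * cinner (x::'a::complex_inner) y"
  by (subst (1 2) cinner_commute) (simp add: cinner_scaleC_left)

lemma cinner_zero_left[simp]: "cinner 0 (y::'a::complex_inner) = 0"
  using cinner_add_left[of "0::'a" 0 y] by simp

lemma cinner_zero_right[simp]: "cinner (y::'a::complex_inner) 0 = 0"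
  using cinner_add_right[of y "0::'a" 0] by simp

lemma cinner_minus_left: "cinner (-x) y = - cinner (x::'a::complex_inner) y"
  using cinner_scaleC_left[of "-1" x y] by (simp add: scaleC_minus1)

lemma cinner_minus_right: "cinner y (-x) = - cinner (y::'a::complex_inner) x"
  using cinner_scaleC_right[of y "-1" x] by (simp add: scaleC_minus1)

lemma cinner_diff_left: "cinner (x - y) z = cinner x z - cinner (y::'a::complex_inner) z"
  unfolding diff_conv_add_uminus by (simp only: cinner_add_left cinner_minus_left)

lemma cinner_diff_right: "cinner z (x - y) = cinner z x - cinner (z::'a::complex_inner) y"
  unfolding diff_conv_add_uminus by (simp only: cinner_add_right cinner_minus_right)

lemma cinner_scaleR_left: "cinner (r *\<^sub>R x) y = complex_of_real r * cinner (x::'a::complex_inner) y"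
proof -
  have "cinner (r *\<^sub>R x) y = cinner (complex_of_real r *\<^sub>C x) y" by (simp only: scaleC_of_real)
  also have "\<dots> = cnj (complex_of_real r) * cinner x y" by (rule cinner_scaleC_left)
  finally show ?thesis by (simp only: complex_cnj_complex_of_real)
qed

lemma cinner_scaleR_right: "cinner y (r *\<^sub>R x) = complex_of_real r * cinner (y::'a::complex_inner) x"
proof -
  have "cinner y (r *\<^sub>R x) = cinner y (complex_of_real r *\<^sub>C x)" by (simp only: scaleC_of_real)
  also have "\<dots> = complex_of_real r * cinner y x" by (rule cinner_scaleC_right)
  finally show ?thesis .
qed

lemma cinner_self: "cinner x x = complex_of_real ((norm (x::'a::complex_inner))^2)"
proof (rule complex_eqI)
  show "Re (cinner x x) = Re (complex_of_real ((norm x)^2))"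
    using norm_eq_sqrt_cinner[of x] cinner_self_nonneg[of x] by simp
  show "Im (cinner x x) = Im (complex_of_real ((norm x)^2))"
    using cinner_self_real[of x] by simp
qed

lemma cinner_ext_right: "(\<And>u. cinner u a = cinner u b) \<Longrightarrow> a = (b::'a::complex_inner)"
proof -
  assume h: "\<And>u. cinner u a = cinner u b"
  have "cinner (a - b) (a - b) = 0" using h[of "a-b"] by (simp add: cinner_diff_right)
  then show "a = b" by (simp add: cinner_self_eq_zero)
qed

lemma cinner_ext_left: "(\<And>u. cinner a u = cinner b u) \<Longrightarrow> a = (b::'a::complex_inner)"
proof -
  assume h: "\<And>u. cinner a u = cinner b u"
  have "cinner (a - b) (a - b) = 0" using h[of "a-b"] by (simp add: cinner_diff_left)
  then show "a = b" by (simp add: cinner_self_eq_zero)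
qed

lemma Re_cinner_sym: "Re (cinner y x) = Re (cinner x (y::'a::complex_inner))"
  by (subst cinner_commute) simp

lemma norm_add_sq: "(norm (a + b))^2 = (norm a)^2 + (norm b)^2 + 2 * Re (cinner a (b::'a::complex_inner))"
proof -
  have "cinner (a+b) (a+b) = cinner a a + cinner a b + cinner b a + cinner b b"
    by (simp add: cinner_add_left cinner_add_right)
  then have "Re (cinner (a+b) (a+b)) = Re (cinner a a) + Re (cinner a b) + Re (cinner b a) + Re (cinner b b)"
    by simp
  then show ?thesis by (simp add: cinner_self Re_cinner_sym[of b a])
qed

lemma norm_diff_sq: "(norm (a - b))^2 = (norm a)^2 + (norm b)^2 - 2 * Re (cinner a (b::'a::complex_inner))"
proof -
  have "cinner (a-b) (a-b) = cinner a a - cinner a b - cinner b a + cinner b b"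
    by (simp add: cinner_diff_left cinner_diff_right)
  then have "Re (cinner (a-b) (a-b)) = Re (cinner a a) - Re (cinner a b) - Re (cinner b a) + Re (cinner b b)"
    by simp
  then show ?thesis by (simp add: cinner_self Re_cinner_sym[of b a])
qed

lemma norm_scaleC_sq: "(norm (t *\<^sub>C w))^2 = (cmod t)^2 * (norm (w::'a::complex_inner))^2"
proof -
  have "cinner (t *\<^sub>C w) (t *\<^sub>C w) = cnj t * t * cinner w w"
    by (simp add: cinner_scaleC_left cinner_scaleC_right)
  also have "cnj t * t = complex_of_real ((cmod t)^2)"
    using complex_norm_square[of t] by (simp add: mult.commute)
  finally have "complex_of_real ((norm (t *\<^sub>C w))^2) = complex_of_real ((cmod t)^2 * (norm w)^2)"
    by (simp only: cinner_self of_real_mult)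
  then show ?thesis by (simp only: of_real_eq_iff)
qed

lemma cauchy_schwarz: "cmod (cinner y x) \<le> norm y * norm (x::'a::complex_inner)"
proof (cases "y = 0")
  case True then show ?thesis by simp
next
  case False
  define n where "n = (norm y)^2"
  have n: "n > 0" using False by (simp add: n_def)
  define c where "c = cinner y x"
  define t where "t = c / complex_of_real n"
  have "cinner (x - t *\<^sub>C y) (x - t *\<^sub>C y)
     = cinner x x - t * cinner x y - cnj t * cinner y x + cnj t * t * cinner y y"
    by (simp add: cinner_diff_left cinner_diff_right cinner_scaleC_left cinner_scaleC_right algebra_simps)
  also have "\<dots> = complex_of_real ((norm x)^2) - t * cnj c - cnj t * c + cnj t * t * complex_of_real n"
    by (simp add: cinner_self n_def c_def cinner_commute[of x y])
  also have "\<dots> = complex_of_real ((norm x)^2) - c * cnj c / complex_of_real n"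
  proof -
    have ct: "cnj t = cnj c / complex_of_real n" by (simp add: t_def)
    have nz: "complex_of_real n \<noteq> 0" using n by simp
    show ?thesis unfolding ct unfolding t_def using nz by (simp add: field_simps)
  qed
  also have "c * cnj c = complex_of_real ((cmod c)^2)"
    using complex_norm_square[of c] by simp
  finally have "cinner (x - t *\<^sub>C y) (x - t *\<^sub>C y) = complex_of_real ((norm x)^2 - (cmod c)^2 / n)"
    by simp
  then have "(norm (x - t *\<^sub>C y))^2 = (norm x)^2 - (cmod c)^2 / n"
    by (simp only: cinner_self of_real_eq_iff)
  then have "(cmod c)^2 / n \<le> (norm x)^2"
    by (metis diff_ge_0_iff_ge zero_le_power2)
  then have "(cmod c)^2 \<le> (norm x)^2 * n" using n by (simp add: field_simps)
  also have "\<dots> = (norm y * norm x)^2" by (simp add: n_def power_mult_distrib)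
  finally have "(cmod c)^2 \<le> (norm y * norm x)^2" .
  then show ?thesis unfolding c_def
    by (rule power2_le_imp_le) simp
qed



lemma bcl_bl:
  assumes "bounded_clinear (T::'a::complex_inner \<Rightarrow> 'a)"
  shows "bounded_linear T"
proof -
  from assms obtain K where add: "\<And>x y. T (x + y) = T x + T y" and sc: "\<And>c x. T (c *\<^sub>C x) = c *\<^sub>C T x"
    and bd: "\<And>x. norm (T x) \<le> norm x * K"
    unfolding bounded_clinear_def by blast
  show ?thesis
  proof (rule bounded_linear_intro[where K=K])
    show "T (x + y) = T x + T y" for x y by (rule add)
    show "T (r *\<^sub>R x) = r *\<^sub>R T x" for r x
      using sc[of "complex_of_real r" x] by (simp only: scaleC_of_real)
    show "norm (T x) \<le> norm x * K" for x by (rule bd)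
  qed
qed

lemma riesz:
  fixes \<phi> :: "'a::chilbert_space \<Rightarrow> complex"
  assumes add: "\<And>x y. \<phi> (x + y) = \<phi> x + \<phi> y"
    and sc: "\<And>c x. \<phi> (c *\<^sub>C x) = c * \<phi> x"
    and bd: "\<And>x. cmod (\<phi> x) \<le> norm x * K"
  shows "\<exists>z. \<forall>x. \<phi> x = cinner z x"
proof -
  have bl: "bounded_linear \<phi>"
  proof (rule bounded_linear_intro[where K=K])
    show "\<phi> (x + y) = \<phi> x + \<phi> y" for x y by (rule add)
    show "\<phi> (r *\<^sub>R x) = r *\<^sub>R \<phi> x" for r x
      using sc[of "complex_of_real r" x] by (simp only: scaleC_of_real scaleR_conv_of_real)
    show "cmod (\<phi> x) \<le> norm x * K" for x by (rule bd)
  qed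
  show ?thesis
  proof (cases "\<forall>x. \<phi> x = 0")
    case True
    then show ?thesis by (intro exI[of _ 0]) simp
  next
    case False
    then obtain u where u: "\<phi> u \<noteq> 0" by blast
    define C where "C = {x. \<phi> x = 1}"
    have u1: "(1 / \<phi> u) *\<^sub>C u \<in> C" using u by (simp add: C_def sc)
    define d where "d = Inf (norm ` C)"
    have Cne: "norm ` C \<noteq> {}" using u1 by blast
    have bdd: "bdd_below (norm ` C)" by (rule bdd_belowI[of _ 0]) auto
    have dle: "d \<le> norm x" if "x \<in> C" for x
      unfolding d_def using bdd that by (simp add: cInf_lower)
    have d0: "0 \<le> d" unfolding d_def using Cne by (rule cInf_greatest) auto
    have "\<forall>n. \<exists>x. x \<in> C \<and> (norm x)^2 < d^2 + 1 / real (Suc n)"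
    proof
      fix n
      have "d < sqrt (d^2 + 1 / real (Suc n))"
        by (intro real_less_rsqrt) simp
      then have "Inf (norm ` C) < sqrt (d^2 + 1 / real (Suc n))" by (simp add: d_def)
      from cInf_lessD[OF Cne this] obtain x where x: "x \<in> C" "norm x < sqrt (d^2 + 1 / real (Suc n))"
        by blast
      have "(norm x)^2 < (sqrt (d^2 + 1 / real (Suc n)))^2"
        using x(2) by (intro power_strict_mono) auto
      also have "\<dots> = d^2 + 1 / real (Suc n)" by (intro real_sqrt_pow2) simp
      finally show "\<exists>x. x \<in> C \<and> (norm x)^2 < d^2 + 1 / real (Suc n)" using x(1) by blast
    qed
    then have "\<exists>X. \<forall>n. X n \<in> C \<and> (norm (X n))^2 < d^2 + 1 / real (Suc n)" by (rule choice)
    then obtain X where X: "\<And>n. X n \<in> C" "\<And>n. (norm (X n))^2 < d^2 + 1 / real (Suc n)"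
      by blast
    have Xdist: "(norm (X m - X n))^2 < 2 / real (Suc m) + 2 / real (Suc n)" for m n
    proof -
      have "(1/2::real) *\<^sub>R (X m + X n) \<in> C"
        using X(1)[of m] X(1)[of n] bl unfolding C_def
        by (simp add: linear_scale[OF bounded_linear.linear[OF bl]] linear_add[OF bounded_linear.linear[OF bl]] scaleR_conv_of_real)
      then have "d \<le> norm ((1/2::real) *\<^sub>R (X m + X n))" by (rule dle)
      then have "2 * d \<le> norm (X m + X n)" by simp
      then have "(2 * d)^2 \<le> (norm (X m + X n))^2" using d0 by (intro power_mono) auto
      moreover have "(norm (X m - X n))^2 = 2 * (norm (X m))^2 + 2 * (norm (X n))^2 - (norm (X m + X n))^2"
        using norm_add_sq[of "X m" "X n"] norm_diff_sq[of "X m" "X n"] by simp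
      ultimately show ?thesis using X(2)[of m] X(2)[of n] by (simp add: power_mult_distrib)
    qed
    have "Cauchy X"
    proof (rule CauchyI)
      fix e :: real assume e: "0 < e"
      then have "0 < e^2 / 4" by simp
      from reals_Archimedean[OF this] obtain M where M: "inverse (real (Suc M)) < e^2 / 4" by blast
      show "\<exists>M. \<forall>m\<ge>M. \<forall>n\<ge>M. norm (X m - X n) < e"
      proof (intro exI[of _ M] allI impI)
        fix m n assume mn: "M \<le> m" "M \<le> n"
        have "2 / real (Suc m) \<le> 2 / real (Suc M)" using mn by (simp add: frac_le)
        moreover have "2 / real (Suc n) \<le> 2 / real (Suc M)" using mn by (simp add: frac_le)
        moreover have "2 / real (Suc M) < e^2 / 2" using M by (simp add: field_simps)
        ultimately have "(norm (X m - X n))^2 < e^2" using Xdist[of m n] by linarith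
        then show "norm (X m - X n) < e" using power_less_imp_less_base[of "norm (X m - X n)" 2 e] e by simp
      qed
    qed
    then obtain x0 where x0: "X \<longlonglongrightarrow> x0"
      using Cauchy_convergent convergent_def by blast
    have "(\<lambda>n. \<phi> (X n)) \<longlonglongrightarrow> \<phi> x0" by (rule bounded_linear.tendsto[OF bl x0])
    moreover have "(\<lambda>n. \<phi> (X n)) = (\<lambda>n. 1)" using X(1) by (simp add: C_def)
    ultimately have "(\<lambda>n. 1) \<longlonglongrightarrow> \<phi> x0" by simp
    then have "\<phi> x0 = 1" by (simp add: LIMSEQ_const_iff)
    then have x0C: "x0 \<in> C" by (simp add: C_def)
    have "(norm x0)^2 \<le> d^2"
    proof (rule LIMSEQ_le)
      show "(\<lambda>n. (norm (X n))^2) \<longlonglongrightarrow> (norm x0)^2"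
        by (intro tendsto_intros x0)
      show "(\<lambda>n. d^2 + inverse (real (Suc n))) \<longlonglongrightarrow> d^2"
        using tendsto_add[OF tendsto_const LIMSEQ_inverse_real_of_nat, of "d^2"] by simp
      show "\<exists>N. \<forall>n\<ge>N. (norm (X n))^2 \<le> d^2 + inverse (real (Suc n))"
        using X(2) by (auto simp: inverse_eq_divide less_imp_le)
    qed
    then have "norm x0 \<le> d" using d0 by (rule power2_le_imp_le)
    then have xmin: "norm x0 \<le> norm x" if "x \<in> C" for x using dle[OF that] by linarith
    have orth: "cinner x0 w = 0" if w: "\<phi> w = 0" for w
    proof -
      define c where "c = cinner x0 w"
      define e where "e = 1 / ((norm w)^2 + 1)"
      have pos: "0 < (norm w)^2 + 1" by (simp add: add_nonneg_pos)
      have e0: "0 < e" using pos by (simp add: e_def)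
      have ew: "e * (norm w)^2 < 1" using pos by (simp add: e_def field_simps)
      define t where "t = - (complex_of_real e * cnj c)"
      have "x0 + t *\<^sub>C w \<in> C" using \<open>\<phi> x0 = 1\<close> w by (simp add: C_def add sc)
      then have "norm x0 \<le> norm (x0 + t *\<^sub>C w)" by (rule xmin)
      then have "(norm x0)^2 \<le> (norm (x0 + t *\<^sub>C w))^2" by (intro power_mono) auto
      also have "\<dots> = (norm x0)^2 + (norm (t *\<^sub>C w))^2 + 2 * Re (cinner x0 (t *\<^sub>C w))"
        by (rule norm_add_sq)
      also have "(norm (t *\<^sub>C w))^2 = (cmod t)^2 * (norm w)^2" by (rule norm_scaleC_sq)
      also have "cmod t = e * cmod c" using e0 by (simp add: t_def norm_mult)
      also have "cinner x0 (t *\<^sub>C w) = t * c" by (simp add: cinner_scaleC_right c_def)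
      also have "t * c = - complex_of_real (e * (cmod c)^2)"
      proof -
        have cc: "cnj c * c = complex_of_real ((cmod c)^2)"
          using complex_norm_square[of c] by (simp add: mult.commute)
        have "t * c = - (complex_of_real e * (cnj c * c))"
          unfolding t_def by (simp only: mult_minus_left mult.assoc)
        then show ?thesis by (simp only: cc of_real_mult)
      qed
      finally have "0 \<le> (e * cmod c)^2 * (norm w)^2 - 2 * (e * (cmod c)^2)" by simp
      then have "0 \<le> e * ((cmod c)^2 * (e * (norm w)^2 - 2))" by (simp add: algebra_simps power2_eq_square)
      then have "0 \<le> (cmod c)^2 * (e * (norm w)^2 - 2)" using e0 by (simp add: zero_le_mult_iff)
      note ge = this
      have neg: "e * (norm w)^2 - 2 < 0" using ew by simp
      have "(cmod c)^2 \<le> 0"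
      proof (rule ccontr)
        assume "\<not> (cmod c)^2 \<le> 0"
        then have "0 < (cmod c)^2" by simp
        from mult_pos_neg[OF this neg] ge show False by simp
      qed
      then show ?thesis by (simp add: c_def)
    qed
    have x0nz: "x0 \<noteq> 0" using \<open>\<phi> x0 = 1\<close> bl by (auto simp: linear_0[OF bounded_linear.linear[OF bl]])
    define z where "z = (1 / (norm x0)^2) *\<^sub>R x0"
    show ?thesis
    proof (intro exI allI)
      fix x
      have "\<phi> (x - \<phi> x *\<^sub>C x0) = 0"
        using \<open>\<phi> x0 = 1\<close> bl by (simp add: linear_diff[OF bounded_linear.linear[OF bl]] sc)
      then have "cinner x0 (x - \<phi> x *\<^sub>C x0) = 0" by (rule orth)
      then have "cinner x0 x = \<phi> x * complex_of_real ((norm x0)^2)"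
        by (simp add: cinner_diff_right cinner_scaleC_right cinner_self)
      then show "\<phi> x = cinner z x" using x0nz
        by (simp add: z_def cinner_scaleR_left)
    qed
  qed
qed



definition is_adj :: "('a::complex_inner \<Rightarrow> 'a) \<Rightarrow> ('a \<Rightarrow> 'a) \<Rightarrow> bool" where
  "is_adj T S \<longleftrightarrow> (\<forall>x y. cinner (T x) y = cinner x (S y))"

lemma adj_exists:
  assumes "bounded_clinear (T::'a::chilbert_space \<Rightarrow> 'a)"
  shows "\<exists>S. is_adj T S"
proof -
  from assms obtain K where add: "\<And>x y. T (x + y) = T x + T y" and sc: "\<And>c x. T (c *\<^sub>C x) = c *\<^sub>C T x"
    and bd: "\<And>x. norm (T x) \<le> norm x * K"
    unfolding bounded_clinear_def by blast
  have "\<forall>y. \<exists>z. \<forall>x. cinner y (T x) = cinner z x"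
  proof
    fix y
    show "\<exists>z. \<forall>x. cinner y (T x) = cinner z x"
    proof (rule riesz[where \<phi> = "\<lambda>x. cinner y (T x)" and K = "norm y * K"])
      show "cinner y (T (x + x')) = cinner y (T x) + cinner y (T x')" for x x'
        by (simp add: add cinner_add_right)
      show "cinner y (T (c *\<^sub>C x)) = c * cinner y (T x)" for c x
        by (simp add: sc cinner_scaleC_right)
      show "cmod (cinner y (T x)) \<le> norm x * (norm y * K)" for x
      proof -
        have "cmod (cinner y (T x)) \<le> norm y * norm (T x)" by (rule cauchy_schwarz)
        also have "\<dots> \<le> norm y * (norm x * K)" by (rule mult_left_mono[OF bd]) simp
        finally show ?thesis by (simp add: algebra_simps)
      qed
    qed
  qed
  then have "\<exists>S. \<forall>y. \<forall>x. cinner y (T x) = cinner (S y) x" by (rule choice)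
  then obtain S where S: "\<And>y x. cinner y (T x) = cinner (S y) x" by blast
  have "is_adj T S" unfolding is_adj_def
  proof (intro allI)
    fix x y
    have "cinner (T x) y = cnj (cinner y (T x))" by (rule cinner_commute)
    also have "\<dots> = cnj (cinner (S y) x)" by (simp only: S)
    also have "\<dots> = cinner x (S y)" by (rule cinner_commute[symmetric])
    finally show "cinner (T x) y = cinner x (S y)" .
  qed
  then show ?thesis by blast
qed

lemma adj_works:
  assumes "bounded_clinear (T::'a::chilbert_space \<Rightarrow> 'a)"
  shows "is_adj T (adj T)"
proof -
  have "\<exists>S. \<forall>x y. cinner (T x) y = cinner x (S y)"
    using adj_exists[OF assms] unfolding is_adj_def .
  then have "\<forall>x y. cinner (T x) y = cinner x ((SOME S. \<forall>x y. cinner (T x) y = cinner x (S y)) y)"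
    by (rule someI_ex)
  then show ?thesis unfolding is_adj_def adj_def .
qed

lemma adj_eq:
  assumes "is_adj (T::'a::chilbert_space \<Rightarrow> 'a) S"
  shows "adj T = S"
proof -
  have a: "\<forall>x y. cinner (T x) y = cinner x (S y)" using assms unfolding is_adj_def .
  then have "\<forall>x y. cinner (T x) y = cinner x ((SOME S. \<forall>x y. cinner (T x) y = cinner x (S y)) y)"
    by (rule someI[where P="\<lambda>S. \<forall>x y. cinner (T x) y = cinner x (S y)"])
  then have h: "\<forall>x y. cinner (T x) y = cinner x (adj T y)" unfolding adj_def .
  show ?thesis
  proof
    fix y
    show "adj T y = S y"
    proof (rule cinner_ext_right)
      fix u
      have "cinner u (adj T y) = cinner (T u) y" using h by simp
      also have "\<dots> = cinner u (S y)" using a by simp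
      finally show "cinner u (adj T y) = cinner u (S y)" .
    qed
  qed
qed

lemma is_adj_sym: "is_adj T S \<Longrightarrow> is_adj S T"
  unfolding is_adj_def
proof (intro allI)
  fix x y
  assume h: "\<forall>x y. cinner (T x) y = cinner x (S y)"
  have "cinner (S x) y = cnj (cinner y (S x))" by (rule cinner_commute)
  also have "\<dots> = cnj (cinner (T y) x)" using h by simp
  also have "\<dots> = cinner x (T y)" by (rule cinner_commute[symmetric])
  finally show "cinner (S x) y = cinner x (T y)" .
qed

lemma bcl_add: "bounded_clinear T \<Longrightarrow> T (x + y) = T x + T y"
  unfolding bounded_clinear_def by blast

lemma bcl_diff: "bounded_clinear T \<Longrightarrow> T (x - y) = T x - T y"
  using linear_diff[OF bounded_linear.linear[OF bcl_bl]] by blast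

lemma bcl_zero: "bounded_clinear T \<Longrightarrow> T 0 = 0"
  using linear_0[OF bounded_linear.linear[OF bcl_bl]] by blast

lemma bcl_cont: "bounded_clinear T \<Longrightarrow> continuous_on UNIV T"
  by (rule linear_continuous_on[OF bcl_bl])

section \<open>R*-algebra basics\<close>

lemma RA_bcl: "R_star_algebra A \<Longrightarrow> T \<in> A \<Longrightarrow> bounded_clinear T"
  unfolding R_star_algebra_def star_subalgebra_def by blast

lemma RA_adjA: "R_star_algebra A \<Longrightarrow> T \<in> A \<Longrightarrow> adj T \<in> A"
  unfolding R_star_algebra_def star_subalgebra_def by blast

lemma RA_adj: "R_star_algebra A \<Longrightarrow> T \<in> A \<Longrightarrow> is_adj T (adj T)"
  by (rule adj_works[OF RA_bcl])

lemma RA_comp: "R_star_algebra A \<Longrightarrow> S \<in> A \<Longrightarrow> T \<in> A \<Longrightarrow> S \<circ> T \<in> A"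
  unfolding R_star_algebra_def star_subalgebra_def by blast

lemma RA_plus: "R_star_algebra A \<Longrightarrow> S \<in> A \<Longrightarrow> T \<in> A \<Longrightarrow> (\<lambda>x. S x + T x) \<in> A"
  unfolding R_star_algebra_def star_subalgebra_def by blast

lemma RA_scal: "R_star_algebra A \<Longrightarrow> T \<in> A \<Longrightarrow> (\<lambda>x. c *\<^sub>C T x) \<in> A"
  unfolding R_star_algebra_def star_subalgebra_def by blast

lemma RA_reg: "R_star_algebra A \<Longrightarrow> x \<in> A \<Longrightarrow> \<exists>y\<in>A. x \<circ> y \<circ> x = x"
  unfolding R_star_algebra_def by blast

lemma proj_facts:
  assumes "R_star_algebra A" "p \<in> projections A"
  shows "p \<in> A" "\<And>v. p (p v) = p v" "is_adj p p" "bounded_clinear p"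
proof -
  show pA: "p \<in> A" using assms(2) by (simp add: projections_def)
  show "p (p v) = p v" for v
  proof -
    have "p \<circ> p = p" using assms(2) by (simp add: projections_def)
    then have "(p \<circ> p) v = p v" by simp
    then show ?thesis by simp
  qed
  show "is_adj p p" using RA_adj[OF assms(1) pA] assms(2) by (simp add: projections_def)
  show "bounded_clinear p" by (rule RA_bcl[OF assms(1) pA])
qed

lemma projI:
  assumes "P \<in> A" "\<And>v. P (P v) = P v" "is_adj P P"
  shows "P \<in> projections A"
  using assms adj_eq[OF assms(3)] unfolding projections_def by (auto simp: fun_eq_iff)

lemma key_cancel:
  assumes adj: "is_adj x xs" and lx: "bounded_clinear x" and lxs: "bounded_clinear xs"
    and h: "\<And>v. xs (x (g (xs (x v)))) = xs (x v)"
  shows "x (g (xs (x v))) = x v"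
proof -
  define w where "w = x (g (xs (x v))) - x v"
  have "xs w = 0" unfolding w_def using h[of v] by (simp add: bcl_diff[OF lxs])
  have "w = x (g (xs (x v)) - v)" unfolding w_def by (simp add: bcl_diff[OF lx])
  then have "cinner w w = cinner (g (xs (x v)) - v) (xs w)"
    using adj unfolding is_adj_def by simp
  also have "\<dots> = 0" using \<open>xs w = 0\<close> by simp
  finally have "w = 0" by (simp add: cinner_self_eq_zero)
  then show ?thesis by (simp add: w_def)
qed



lemma range_proj:
  assumes RA: "R_star_algebra A" and xA: "x \<in> A"
  shows "\<exists>y\<in>A. (x \<circ> y \<circ> adj x) \<in> projections A \<and> (\<forall>v. x (y (adj x (x v))) = x v)"
proof -
  define xs where "xs = adj x"
  have xsA: "xs \<in> A" unfolding xs_def by (rule RA_adjA[OF RA xA])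
  have ax: "is_adj x xs" unfolding xs_def by (rule RA_adj[OF RA xA])
  have axs: "is_adj xs x" by (rule is_adj_sym[OF ax])
  have bx: "bounded_clinear x" by (rule RA_bcl[OF RA xA])
  have bxs: "bounded_clinear xs" by (rule RA_bcl[OF RA xsA])
  have aA: "xs \<circ> x \<in> A" by (rule RA_comp[OF RA xsA xA])
  obtain y where yA: "y \<in> A" and yreg: "(xs \<circ> x) \<circ> y \<circ> (xs \<circ> x) = xs \<circ> x"
    using RA_reg[OF RA aA] by blast
  have yr: "xs (x (y (xs (x v)))) = xs (x v)" for v
  proof -
    have "((xs \<circ> x) \<circ> y \<circ> (xs \<circ> x)) v = (xs \<circ> x) v" using yreg by simp
    then show ?thesis by simp
  qed
  define ys where "ys = adj y"
  have ysA: "ys \<in> A" unfolding ys_def by (rule RA_adjA[OF RA yA])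
  have ay: "is_adj y ys" unfolding ys_def by (rule RA_adj[OF RA yA])
  have ysr: "xs (x (ys (xs (x v)))) = xs (x v)" for v
  proof (rule cinner_ext_left)
    fix u
    have "cinner (xs (x (ys (xs (x v))))) u = cinner (x (ys (xs (x v)))) (x u)"
      using axs unfolding is_adj_def by simp
    also have "\<dots> = cinner (ys (xs (x v))) (xs (x u))"
      using ax unfolding is_adj_def by simp
    also have "\<dots> = cinner (xs (x v)) (y (xs (x u)))"
      using is_adj_sym[OF ay] unfolding is_adj_def by simp
    also have "\<dots> = cinner (x v) (x (y (xs (x u))))"
      using axs unfolding is_adj_def by simp
    also have "\<dots> = cinner v (xs (x (y (xs (x u)))))"
      using ax unfolding is_adj_def by simp
    also have "\<dots> = cinner v (xs (x u))" by (simp only: yr)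
    also have "\<dots> = cinner (x v) (x u)"
      using ax unfolding is_adj_def by simp
    also have "\<dots> = cinner (xs (x v)) u"
      using axs unfolding is_adj_def by simp
    finally show "cinner (xs (x (ys (xs (x v))))) u = cinner (xs (x v)) u" .
  qed
  have c1: "x (y (xs (x v))) = x v" for v by (rule key_cancel[OF ax bx bxs yr])
  have c2: "x (ys (xs (x v))) = x v" for v by (rule key_cancel[OF ax bx bxs ysr])
  define P where "P = x \<circ> y \<circ> xs"
  define P' where "P' = x \<circ> ys \<circ> xs"
  have PP: "P (P u) = P u" for u unfolding P_def using c1[of "y (xs u)"] by simp
  have P'P: "P' (P u) = P u" for u unfolding P_def P'_def using c2[of "y (xs u)"] by simp
  have aPP': "is_adj P P'" unfolding is_adj_def
  proof (intro allI)
    fix u v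
    have "cinner (P u) v = cinner (y (xs u)) (xs v)"
      unfolding P_def using ax unfolding is_adj_def by simp
    also have "\<dots> = cinner (xs u) (ys (xs v))"
      using ay unfolding is_adj_def by simp
    also have "\<dots> = cinner u (x (ys (xs v)))"
      using axs unfolding is_adj_def by simp
    finally show "cinner (P u) v = cinner u (P' v)" unfolding P'_def by simp
  qed
  have aP'P: "is_adj P' P" by (rule is_adj_sym[OF aPP'])
  have aPP: "is_adj P P" unfolding is_adj_def
  proof (intro allI)
    fix u v
    have "cinner (P u) v = cinner (P' (P u)) v" by (simp only: P'P)
    also have "\<dots> = cinner (P u) (P v)" using aP'P unfolding is_adj_def by simp
    also have "\<dots> = cinner u (P' (P v))" using aPP' unfolding is_adj_def by simp
    also have "\<dots> = cinner u (P v)" by (simp only: P'P)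
    finally show "cinner (P u) v = cinner u (P v)" .
  qed
  have PA: "P \<in> A" unfolding P_def by (intro RA_comp[OF RA] yA xA xsA)
  have "P \<in> projections A" by (rule projI[OF PA PP aPP])
  then show ?thesis using yA c1 unfolding P_def xs_def by blast
qed

lemma swap1:
  assumes "is_adj p p" "is_adj r r" "\<And>v. p (r v) = p v"
  shows "r (p v) = p v"
proof (rule cinner_ext_left)
  fix u
  have "cinner (r (p v)) u = cinner v (p (r u))" using assms(1,2) unfolding is_adj_def by simp
  also have "\<dots> = cinner v (p u)" by (simp only: assms(3))
  also have "\<dots> = cinner (p v) u" using assms(1) unfolding is_adj_def by simp
  finally show "cinner (r (p v)) u = cinner (p v) u" .
qed

lemma swap2:
  assumes "is_adj p p" "is_adj r r" "\<And>v. r (p v) = p v"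
  shows "p (r v) = p v"
proof (rule cinner_ext_left)
  fix u
  have "cinner (p (r v)) u = cinner v (r (p u))" using assms(1,2) unfolding is_adj_def by simp
  also have "\<dots> = cinner v (p u)" by (simp only: assms(3))
  also have "\<dots> = cinner (p v) u" using assms(1) unfolding is_adj_def by simp
  finally show "cinner (p (r v)) u = cinner (p v) u" .
qed

lemma proj_pos:
  assumes "is_adj p p" "\<And>v. p (p v) = p v"
  shows "cinner (p w) w = complex_of_real ((norm (p w))^2)"
proof -
  have "cinner (p w) w = cinner (p (p w)) w" by (simp only: assms(2))
  also have "\<dots> = cinner (p w) (p w)" using assms(1) unfolding is_adj_def by simp
  finally show ?thesis by (simp only: cinner_self)
qed

lemma sum_zero:
  assumes "is_adj p p" "\<And>v. p (p v) = p v" "is_adj q q" "\<And>v. q (q v) = q v"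
    and "p w + q w = 0"
  shows "p w = 0" "q w = 0"
proof -
  have "cinner (p w + q w) w = 0" using assms(5) by simp
  then have "cinner (p w) w + cinner (q w) w = 0" by (simp only: cinner_add_left)
  then have "complex_of_real ((norm (p w))^2 + (norm (q w))^2) = 0"
    by (simp only: proj_pos[OF assms(1,2)] proj_pos[OF assms(3,4)] of_real_add)
  then have "(norm (p w))^2 + (norm (q w))^2 = 0" by (simp only: of_real_eq_0_iff)
  then have "norm (p w) = 0 \<and> norm (q w) = 0"
    by (simp add: add_nonneg_eq_0_iff)
  then show "p w = 0" "q w = 0" by simp_all
qed

lemma compl_proj:
  assumes RA: "R_star_algebra A" and idA: "id \<in> A" and p: "p \<in> projections A"
  shows "(\<lambda>x. x - p x) \<in> projections A"
proof -
  note pf = proj_facts[OF RA p]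
  have "(\<lambda>x. id x + (-1) *\<^sub>C p x) \<in> A" by (intro RA_plus[OF RA] idA RA_scal[OF RA] pf(1))
  moreover have "(\<lambda>x. id x + (-1) *\<^sub>C p x) = (\<lambda>x. x - p x)" by (simp add: fun_eq_iff scaleC_minus1)
  ultimately have inA: "(\<lambda>x. x - p x) \<in> A" by simp
  show ?thesis
  proof (rule projI[OF inA])
    show "(v - p v) - p (v - p v) = v - p v" for v by (simp add: bcl_diff[OF pf(4)] pf(2))
    show "is_adj (\<lambda>x. x - p x) (\<lambda>x. x - p x)" unfolding is_adj_def
    proof (intro allI)
      fix u v
      have "cinner (u - p u) v = cinner u v - cinner (p u) v" by (rule cinner_diff_left)
      also have "\<dots> = cinner u v - cinner u (p v)" using pf(3) unfolding is_adj_def by simp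
      also have "\<dots> = cinner u (v - p v)" by (simp only: cinner_diff_right)
      finally show "cinner (u - p u) v = cinner u (v - p v)" .
    qed
  qed
qed



lemma join_proj:
  assumes RA: "R_star_algebra A" and p: "p \<in> projections A" and q: "q \<in> projections A"
  shows "\<exists>r\<in>projections A. range r = {x + y |x y. x \<in> range p \<and> y \<in> range q}
     \<and> p \<circ> r = p \<and> q \<circ> r = q
     \<and> (\<forall>s\<in>projections A. p \<circ> s = p \<and> q \<circ> s = q \<longrightarrow> r \<circ> s = r)
     \<and> (\<forall>v. p v = 0 \<and> q v = 0 \<longrightarrow> r v = 0)"
proof -
  note pf = proj_facts[OF RA p]
  note qf = proj_facts[OF RA q]
  define x where "x = (\<lambda>v. p v + q v)"
  have xA: "x \<in> A" unfolding x_def by (rule RA_plus[OF RA pf(1) qf(1)])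
  have bx: "bounded_clinear x" by (rule RA_bcl[OF RA xA])
  have ax: "is_adj x x" unfolding is_adj_def x_def
    using pf(3) qf(3) unfolding is_adj_def by (simp add: cinner_add_left cinner_add_right)
  have adjx: "adj x = x" by (rule adj_eq[OF ax])
  obtain y where yA: "y \<in> A" and rproj: "(x \<circ> y \<circ> x) \<in> projections A"
    and c1: "\<And>v. x (y (x (x v))) = x v"
    using range_proj[OF RA xA] unfolding adjx by blast
  define r where "r = x \<circ> y \<circ> x"
  have rP: "r \<in> projections A" unfolding r_def by (rule rproj)
  note rf = proj_facts[OF RA rP]
  have rx: "r (x v) = x v" for v unfolding r_def using c1 by simp
  have xr: "x (r v) = x v" for v
    by (rule swap2[OF ax rf(3) rx])
  have pr: "p (r v) = p v \<and> q (r v) = q v" for v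
  proof -
    define w where "w = v - r v"
    have "x w = 0" unfolding w_def by (simp add: bcl_diff[OF bx] xr)
    then have "p w + q w = 0" by (simp add: x_def)
    from sum_zero[OF pf(3) pf(2) qf(3) qf(2) this] have "p w = 0" "q w = 0" .
    then show ?thesis unfolding w_def by (simp add: bcl_diff[OF pf(4)] bcl_diff[OF qf(4)])
  qed
  have rp: "r (p v) = p v" for v by (rule swap1[OF pf(3) rf(3)]) (use pr in blast)
  have rq: "r (q v) = q v" for v by (rule swap1[OF qf(3) rf(3)]) (use pr in blast)
  have range_eq: "range r = {x + y |x y. x \<in> range p \<and> y \<in> range q}"
  proof
    show "range r \<subseteq> {x + y |x y. x \<in> range p \<and> y \<in> range q}"
    proof
      fix z assume "z \<in> range r"
      then obtain v where "z = r v" by blast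
      then have "z = p (y (x v)) + q (y (x v))" by (simp add: r_def x_def)
      then show "z \<in> {x + y |x y. x \<in> range p \<and> y \<in> range q}" by blast
    qed
    show "{x + y |x y. x \<in> range p \<and> y \<in> range q} \<subseteq> range r"
    proof
      fix z assume "z \<in> {x + y |x y. x \<in> range p \<and> y \<in> range q}"
      then obtain a b where z: "z = p a + q b" by blast
      have "r z = z" unfolding z by (simp add: bcl_add[OF rf(4)] rp rq)
      then show "z \<in> range r" by (metis rangeI)
    qed
  qed
  have least: "r \<circ> s = r" if s: "s \<in> projections A" "p \<circ> s = p" "q \<circ> s = q" for s
  proof -
    note sf = proj_facts[OF RA s(1)]
    have ps: "p (s v) = p v" for v using s(2) by (metis comp_apply)
    have qs: "q (s v) = q v" for v using s(3) by (metis comp_apply)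
    have sp: "s (p v) = p v" for v by (rule swap1[OF pf(3) sf(3) ps])
    have sq: "s (q v) = q v" for v by (rule swap1[OF qf(3) sf(3) qs])
    have sr: "s (r v) = r v" for v
      unfolding r_def by (simp add: x_def bcl_add[OF sf(4)] sp sq)
    have "r (s v) = r v" for v by (rule swap2[OF rf(3) sf(3) sr])
    then show ?thesis by (simp add: fun_eq_iff)
  qed
  have zero: "r v = 0" if "p v = 0" "q v = 0" for v
  proof -
    have "x v = 0" using that by (simp add: x_def)
    then show ?thesis unfolding r_def
      by (simp add: bcl_zero[OF bx] bcl_zero[OF RA_bcl[OF RA yA]])
  qed
  show ?thesis
    using rP range_eq pr least zero by (intro bexI[of _ r]) (auto simp: fun_eq_iff)
qed



theorem proposition4p1:
  fixes A :: "('a::chilbert_space \<Rightarrow> 'a) set" and p q :: "'a \<Rightarrow> 'a"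
  assumes "R_star_algebra A" and "id \<in> A"
    and "p \<in> projections A" and "q \<in> projections A"
  shows "(\<exists>r\<in>projections A. range r = {x + y |x y. x \<in> range p \<and> y \<in> range q}
            \<and> proj_le p r \<and> proj_le q r
            \<and> (\<forall>s\<in>projections A. proj_le p s \<and> proj_le q s \<longrightarrow> proj_le r s))
       \<and> closed {x + y |x y. x \<in> range p \<and> y \<in> range q}
       \<and> (\<exists>r\<in>projections A. range r = range p \<inter> range q
            \<and> proj_le r p \<and> proj_le r q
            \<and> (\<forall>s\<in>projections A. proj_le s p \<and> proj_le s q \<longrightarrow> proj_le s r))
       \<and> (\<lambda>x. x - p x) \<in> projections A \<and> range (\<lambda>x. x - p x) = orth_compl (range p)"
proof -
  note RA = assms(1) and idA = assms(2) and p = assms(3) and q = assms(4)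
  note pf = proj_facts[OF RA p]
  note qf = proj_facts[OF RA q]
  obtain r1 where r1P: "r1 \<in> projections A"
    and r1range: "range r1 = {x + y |x y. x \<in> range p \<and> y \<in> range q}"
    and r1p: "p \<circ> r1 = p" and r1q: "q \<circ> r1 = q"
    and r1least: "\<forall>s\<in>projections A. p \<circ> s = p \<and> q \<circ> s = q \<longrightarrow> r1 \<circ> s = r1"
    using join_proj[OF RA p q] by blast
  note r1f = proj_facts[OF RA r1P]
  have part1: "\<exists>r\<in>projections A. range r = {x + y |x y. x \<in> range p \<and> y \<in> range q}
            \<and> proj_le p r \<and> proj_le q r
            \<and> (\<forall>s\<in>projections A. proj_le p s \<and> proj_le q s \<longrightarrow> proj_le r s)"
  proof (rule bexI[OF _ r1P], intro conjI)
    show "range r1 = {x + y |x y. x \<in> range p \<and> y \<in> range q}" by (rule r1range)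
    show "proj_le p r1" unfolding proj_le_def by (rule r1p)
    show "proj_le q r1" unfolding proj_le_def by (rule r1q)
    show "\<forall>s\<in>projections A. proj_le p s \<and> proj_le q s \<longrightarrow> proj_le r1 s"
      unfolding proj_le_def using r1least by blast
  qed
  have "range r1 = {v. r1 v = v}"
  proof
    show "range r1 \<subseteq> {v. r1 v = v}" using r1f(2) by auto
    show "{v. r1 v = v} \<subseteq> range r1"
    proof
      fix z assume "z \<in> {v. r1 v = v}"
      then have "z = r1 z" by simp
      then show "z \<in> range r1" by (rule range_eqI)
    qed
  qed
  moreover have "closed {v. r1 v = v}"
    by (rule closed_Collect_eq[OF bcl_cont[OF r1f(4)] continuous_on_id])
  ultimately have part2: "closed {x + y |x y. x \<in> range p \<and> y \<in> range q}"
    using r1range by simp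
  define p' where "p' = (\<lambda>x. x - p x)"
  define q' where "q' = (\<lambda>x. x - q x)"
  have p'P: "p' \<in> projections A" unfolding p'_def by (rule compl_proj[OF RA idA p])
  have q'P: "q' \<in> projections A" unfolding q'_def by (rule compl_proj[OF RA idA q])
  note p'f = proj_facts[OF RA p'P]
  note q'f = proj_facts[OF RA q'P]
  obtain J where JP: "J \<in> projections A"
    and Jp: "p' \<circ> J = p'" and Jq: "q' \<circ> J = q'"
    and Jleast: "\<forall>s\<in>projections A. p' \<circ> s = p' \<and> q' \<circ> s = q' \<longrightarrow> J \<circ> s = J"
    and Jzero: "\<forall>v. p' v = 0 \<and> q' v = 0 \<longrightarrow> J v = 0"
    using join_proj[OF RA p'P q'P] by blast
  note Jf = proj_facts[OF RA JP]
  define r2 where "r2 = (\<lambda>x. x - J x)"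
  have r2P: "r2 \<in> projections A" unfolding r2_def by (rule compl_proj[OF RA idA JP])
  have p'J: "p' (J v) = p' v" for v using fun_cong[OF Jp, of v] by simp
  have q'J: "q' (J v) = q' v" for v using fun_cong[OF Jq, of v] by simp
  have Jp': "J (p' v) = p' v" for v by (rule swap1[OF p'f(3) Jf(3) p'J])
  have Jq': "J (q' v) = q' v" for v by (rule swap1[OF q'f(3) Jf(3) q'J])
  have r2range: "range r2 = range p \<inter> range q"
  proof
    show "range r2 \<subseteq> range p \<inter> range q"
    proof
      fix z assume "z \<in> range r2"
      then obtain u where z: "z = u - J u" unfolding r2_def by blast
      have "p' z = 0" unfolding z using p'J[of u] by (simp add: bcl_diff[OF p'f(4)])
      then have "p z = z" by (simp add: p'_def)
      then have zp: "z \<in> range p" by (rule range_eqI[OF sym])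
      have "q' z = 0" unfolding z using q'J[of u] by (simp add: bcl_diff[OF q'f(4)])
      then have "q z = z" by (simp add: q'_def)
      then have zq: "z \<in> range q" by (rule range_eqI[OF sym])
      from zp zq show "z \<in> range p \<inter> range q" by (rule IntI)
    qed
    show "range p \<inter> range q \<subseteq> range r2"
    proof
      fix z assume "z \<in> range p \<inter> range q"
      then obtain a b where "z = p a" "z = q b" by blast
      then have "p z = z" "q z = z" using pf(2)[of a] qf(2)[of b] by simp_all
      then have "p' z = 0" "q' z = 0" by (simp_all add: p'_def q'_def)
      then have "J z = 0" using Jzero by blast
      then have "r2 z = z" by (simp add: r2_def)
      then show "z \<in> range r2" by (rule range_eqI[OF sym])
    qed
  qed
  have r2p: "r2 \<circ> p = r2"
  proof
    fix v
    have "J (v - p v) = v - p v" using Jp'[of v] by (simp add: p'_def)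
    then have "J v - J (p v) = v - p v" by (simp add: bcl_diff[OF Jf(4)])
    then show "(r2 \<circ> p) v = r2 v" by (simp add: r2_def algebra_simps)
  qed
  have r2q: "r2 \<circ> q = r2"
  proof
    fix v
    have "J (v - q v) = v - q v" using Jq'[of v] by (simp add: q'_def)
    then have "J v - J (q v) = v - q v" by (simp add: bcl_diff[OF Jf(4)])
    then show "(r2 \<circ> q) v = r2 v" by (simp add: r2_def algebra_simps)
  qed
  have r2great: "s \<circ> r2 = s" if s: "s \<in> projections A" "s \<circ> p = s" "s \<circ> q = s" for s
  proof -
    note sf = proj_facts[OF RA s(1)]
    define s' where "s' = (\<lambda>x. x - s x)"
    have s'P: "s' \<in> projections A" unfolding s'_def by (rule compl_proj[OF RA idA s(1)])
    note s'f = proj_facts[OF RA s'P]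
    have sp: "s (p v) = s v" for v using fun_cong[OF s(2), of v] by simp
    have sq: "s (q v) = s v" for v using fun_cong[OF s(3), of v] by simp
    have ps: "p (s v) = s v" for v by (rule swap1[OF sf(3) pf(3) sp])
    have qs: "q (s v) = s v" for v by (rule swap1[OF sf(3) qf(3) sq])
    have "p' \<circ> s' = p'"
    proof
      fix v show "(p' \<circ> s') v = p' v"
        by (simp add: p'_def s'_def bcl_diff[OF pf(4)] ps)
    qed
    moreover have "q' \<circ> s' = q'"
    proof
      fix v show "(q' \<circ> s') v = q' v"
        by (simp add: q'_def s'_def bcl_diff[OF qf(4)] qs)
    qed
    ultimately have Js0: "J \<circ> s' = J" using Jleast s'P by blast
    have Js': "J (s' v) = J v" for v using fun_cong[OF Js0, of v] by (simp only: comp_apply)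
    have s'J: "s' (J v) = J v" for v by (rule swap1[OF Jf(3) s'f(3) Js'])
    have "s (J v) = 0" for v using s'J[of v] by (simp add: s'_def)
    then show ?thesis by (simp add: fun_eq_iff r2_def bcl_diff[OF sf(4)])
  qed
  have part3: "\<exists>r\<in>projections A. range r = range p \<inter> range q
            \<and> proj_le r p \<and> proj_le r q
            \<and> (\<forall>s\<in>projections A. proj_le s p \<and> proj_le s q \<longrightarrow> proj_le s r)"
  proof (rule bexI[OF _ r2P], intro conjI)
    show "range r2 = range p \<inter> range q" by (rule r2range)
    show "proj_le r2 p" unfolding proj_le_def by (rule r2p)
    show "proj_le r2 q" unfolding proj_le_def by (rule r2q)
    show "\<forall>s\<in>projections A. proj_le s p \<and> proj_le s q \<longrightarrow> proj_le s r2"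
      unfolding proj_le_def using r2great by blast
  qed
  have part4: "range (\<lambda>x. x - p x) = orth_compl (range p)"
  proof
    show "range (\<lambda>x. x - p x) \<subseteq> orth_compl (range p)"
    proof
      fix z assume "z \<in> range (\<lambda>x. x - p x)"
      then obtain u where z: "z = u - p u" by blast
      have "cinner (p a) z = 0" for a
      proof -
        have "cinner (p a) z = cinner a (p z)" using pf(3) unfolding is_adj_def by simp
        also have "p z = 0" unfolding z by (simp add: bcl_diff[OF pf(4)] pf(2))
        finally show ?thesis by simp
      qed
      then show "z \<in> orth_compl (range p)" unfolding orth_compl_def by blast
    qed
    show "orth_compl (range p) \<subseteq> range (\<lambda>x. x - p x)"
    proof
      fix z assume "z \<in> orth_compl (range p)"
      then have "cinner (p z) z = 0" unfolding orth_compl_def by blast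
      then have "complex_of_real ((norm (p z))^2) = 0" by (simp only: proj_pos[OF pf(3) pf(2)])
      then have "p z = 0" by simp
      then have "z = z - p z" by simp
      then show "z \<in> range (\<lambda>x. x - p x)" by (rule range_eqI)
    qed
  qed
  show ?thesis using part1 part2 part3 part4 compl_proj[OF RA idA p] by (intro conjI)
qed

end
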